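(* Let $G$ be a group with unit $e$, $X$ a set and $(X_g,\alpha_g)_{g\in G}$ a lax partial action of $G$ on $X$. The following are equivalent: (i) $(X_g,\alpha_g)$ is a partial action; (ii) the inclusion $\{(h,g,x)\in G\times G\times X: x\in X_{g^{-1}},\ \alpha_g(x)\in X_{h^{-1}}\}\subseteq \{(h,g,x)\in G\times G\times X : x\in X_{g^{-1}}\cap X_{(hg)^{-1}}\}$ is a bijection (i.e. the two sets are equal); (iii) for each $g\in G$ one has $\alpha_g(X_{g^{-1}})\subseteq X_g$.
   Context: A partial action datum of $G$ on $X$ is a family of subsets $X_g\subseteq X$ ($g\in G$) with maps $\alpha_g:X_{g^{-1}}\to X$. It is a partial action if (PA1) $X_e=X$ and $\alpha_e=\mathrm{id}_X$; (PA2) $\alpha_g(X_{g^{-1}}\cap X_h)\subseteq X_g\cap X_{gh}$ for all $g,h$; (PA3) $\alpha_h\circ\alpha_g=\alpha_{hg}$ on $X_{g^{-1}}\cap X_{(hg)^{-1}}$. It is a lax partial action if (LPA1) $X_e=X$ and $\alpha_e=\mathrm{id}_X$; (LPA2) $X_{g^{-1}}\cap\alpha_g^{-1}(X_{h^{-1}})\subseteq X_{(hg)^{-1}}$; (LPA3) $\alpha_h\circ\alpha_g=\alpha_{hg}$ on $X_{g^{-1}}\cap\alpha_g^{-1}(X_{h^{-1}})$. (By (LPA2) the first set in (ii) is contained in the second.) *)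

theory Defs
  imports "HOL-Algebra.Group"
begin

text \<open>Values of alpha g outside D (inv g) and of D, alpha outside carrier G are irrelevant.\<close>

definition partial_action_datum ::
  "('g, 'm) monoid_scheme \<Rightarrow> 'x set \<Rightarrow> ('g \<Rightarrow> 'x set) \<Rightarrow> ('g \<Rightarrow> 'x \<Rightarrow> 'x) \<Rightarrow> bool" where
  "partial_action_datum G X D \<alpha> \<longleftrightarrow>
     (\<forall>g\<in>carrier G. D g \<subseteq> X \<and> \<alpha> g ` D (inv\<^bsub>G\<^esub> g) \<subseteq> X)"

definition partial_action ::
  "('g, 'm) monoid_scheme \<Rightarrow> 'x set \<Rightarrow> ('g \<Rightarrow> 'x set) \<Rightarrow> ('g \<Rightarrow> 'x \<Rightarrow> 'x) \<Rightarrow> bool" where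
  "partial_action G X D \<alpha> \<longleftrightarrow>
     partial_action_datum G X D \<alpha> \<and>
     \<comment> \<open>PA1\<close>
     D \<one>\<^bsub>G\<^esub> = X \<and> (\<forall>x\<in>X. \<alpha> \<one>\<^bsub>G\<^esub> x = x) \<and>
     \<comment> \<open>PA2\<close>
     (\<forall>g\<in>carrier G. \<forall>h\<in>carrier G.
        \<alpha> g ` (D (inv\<^bsub>G\<^esub> g) \<inter> D h) \<subseteq> D g \<inter> D (g \<otimes>\<^bsub>G\<^esub> h)) \<and>
     \<comment> \<open>PA3\<close>
     (\<forall>g\<in>carrier G. \<forall>h\<in>carrier G.
        \<forall>x \<in> D (inv\<^bsub>G\<^esub> g) \<inter> D (inv\<^bsub>G\<^esub> (h \<otimes>\<^bsub>G\<^esub> g)).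
          \<alpha> h (\<alpha> g x) = \<alpha> (h \<otimes>\<^bsub>G\<^esub> g) x)"

definition lax_partial_action ::
  "('g, 'm) monoid_scheme \<Rightarrow> 'x set \<Rightarrow> ('g \<Rightarrow> 'x set) \<Rightarrow> ('g \<Rightarrow> 'x \<Rightarrow> 'x) \<Rightarrow> bool" where
  "lax_partial_action G X D \<alpha> \<longleftrightarrow>
     partial_action_datum G X D \<alpha> \<and>
     \<comment> \<open>LPA1\<close>
     D \<one>\<^bsub>G\<^esub> = X \<and> (\<forall>x\<in>X. \<alpha> \<one>\<^bsub>G\<^esub> x = x) \<and>
     \<comment> \<open>LPA2: X_{g^-1} \<inter> alpha_g^-1(X_{h^-1}) \<subseteq> X_{(hg)^-1}\<close>
     (\<forall>g\<in>carrier G. \<forall>h\<in>carrier G.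
        {x \<in> D (inv\<^bsub>G\<^esub> g). \<alpha> g x \<in> D (inv\<^bsub>G\<^esub> h)} \<subseteq> D (inv\<^bsub>G\<^esub> (h \<otimes>\<^bsub>G\<^esub> g))) \<and>
     \<comment> \<open>LPA3\<close>
     (\<forall>g\<in>carrier G. \<forall>h\<in>carrier G.
        \<forall>x \<in> {x \<in> D (inv\<^bsub>G\<^esub> g). \<alpha> g x \<in> D (inv\<^bsub>G\<^esub> h)}.
          \<alpha> h (\<alpha> g x) = \<alpha> (h \<otimes>\<^bsub>G\<^esub> g) x)"

end

theory Submission
  imports Defs
begin

lemma main_aux:
  fixes G (structure) and X :: "'x set"
    and D :: "'g \<Rightarrow> 'x set" and \<alpha> :: "'g \<Rightarrow> 'x \<Rightarrow> 'x"
  assumes "group G"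
    and "lax_partial_action G X D \<alpha>"
  shows "(partial_action G X D \<alpha> \<longleftrightarrow>
           {(h, g, x). h \<in> carrier G \<and> g \<in> carrier G \<and> x \<in> X \<and>
              x \<in> D (inv\<^bsub>G\<^esub> g) \<and> \<alpha> g x \<in> D (inv\<^bsub>G\<^esub> h)}
           = {(h, g, x). h \<in> carrier G \<and> g \<in> carrier G \<and> x \<in> X \<and>
              x \<in> D (inv\<^bsub>G\<^esub> g) \<inter> D (inv\<^bsub>G\<^esub> (h \<otimes>\<^bsub>G\<^esub> g))})
       \<and> (partial_action G X D \<alpha> \<longleftrightarrow>
           (\<forall>g\<in>carrier G. \<alpha> g ` D (inv\<^bsub>G\<^esub> g) \<subseteq> D g))"
proof -
  interpret group G by fact
  have dat: "partial_action_datum G X D \<alpha>" and one: "D \<one> = X" and aone: "\<forall>x\<in>X. \<alpha> \<one> x = x"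
    and L2: "\<And>g h x. g \<in> carrier G \<Longrightarrow> h \<in> carrier G \<Longrightarrow> x \<in> D (inv g) \<Longrightarrow> \<alpha> g x \<in> D (inv h)
           \<Longrightarrow> x \<in> D (inv (h \<otimes> g))"
    and L3: "\<And>g h x. g \<in> carrier G \<Longrightarrow> h \<in> carrier G \<Longrightarrow> x \<in> D (inv g) \<Longrightarrow> \<alpha> g x \<in> D (inv h)
           \<Longrightarrow> \<alpha> h (\<alpha> g x) = \<alpha> (h \<otimes> g) x"
    using assms(2) unfolding lax_partial_action_def by blast+
  have sub: "\<And>g. g \<in> carrier G \<Longrightarrow> D g \<subseteq> X" using dat unfolding partial_action_datum_def by blast
  let ?A = "{(h, g, x). h \<in> carrier G \<and> g \<in> carrier G \<and> x \<in> X \<and>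
              x \<in> D (inv g) \<and> \<alpha> g x \<in> D (inv h)}"
  let ?B = "{(h, g, x). h \<in> carrier G \<and> g \<in> carrier G \<and> x \<in> X \<and>
              x \<in> D (inv g) \<inter> D (inv (h \<otimes> g))}"
  let ?I = "\<forall>g\<in>carrier G. \<alpha> g ` D (inv g) \<subseteq> D g"
  have PI: "partial_action G X D \<alpha> \<Longrightarrow> ?I"
  proof
    fix g assume P: "partial_action G X D \<alpha>" and g: "g \<in> carrier G"
    have "\<alpha> g ` (D (inv g) \<inter> D \<one>) \<subseteq> D g \<inter> D (g \<otimes> \<one>)"
      using P g unfolding partial_action_def by blast
    moreover have "D (inv g) \<inter> D \<one> = D (inv g)" using sub[of "inv g"] g one by auto
    ultimately show "\<alpha> g ` D (inv g) \<subseteq> D g" by auto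
  qed
  have IS: "?I \<Longrightarrow> ?A = ?B"
  proof
    show "?A \<subseteq> ?B" using L2 by auto
  next
    assume I: ?I
    show "?B \<subseteq> ?A"
    proof clarify
      fix h g x assume h: "h \<in> carrier G" and g: "g \<in> carrier G" and x: "x \<in> X"
        and x1: "x \<in> D (inv g)" and x2: "x \<in> D (inv (h \<otimes> g))"
      let ?y = "\<alpha> g x"
      have y: "?y \<in> D g" using I g x1 by blast
      have yi: "?y \<in> D (inv (inv g))" using y g by simp
      have "\<alpha> (inv g) ?y = \<alpha> (inv g \<otimes> g) x" using L3[OF g inv_closed[OF g] x1 yi] .
      also have "\<dots> = x" using g x aone by simp
      finally have "\<alpha> (inv g) ?y \<in> D (inv (h \<otimes> g))" using x2 by simp
      from L2[OF inv_closed[OF g] m_closed[OF h g] yi this]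
      have "?y \<in> D (inv (h \<otimes> g \<otimes> inv g))" .
      moreover have "h \<otimes> g \<otimes> inv g = h" using h g by (simp add: m_assoc)
      ultimately show "?y \<in> D (inv h)" by simp
    qed
  qed
  have SP: "?A = ?B \<Longrightarrow> partial_action G X D \<alpha>"
  proof -
    assume S: "?A = ?B"
    have key: "\<And>h g x. h \<in> carrier G \<Longrightarrow> g \<in> carrier G \<Longrightarrow> x \<in> D (inv g)
       \<Longrightarrow> x \<in> D (inv (h \<otimes> g)) \<Longrightarrow> \<alpha> g x \<in> D (inv h)"
    proof -
      fix h g x assume h: "h \<in> carrier G" and g: "g \<in> carrier G" and x1: "x \<in> D (inv g)"
        and x2: "x \<in> D (inv (h \<otimes> g))"
      have "x \<in> X" using sub[of "inv g"] g x1 by auto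
      hence "(h, g, x) \<in> ?B" using h g x1 x2 by auto
      hence "(h, g, x) \<in> ?A" using S by simp
      thus "\<alpha> g x \<in> D (inv h)" by auto
    qed
    have PA2: "\<forall>g\<in>carrier G. \<forall>h\<in>carrier G.
        \<alpha> g ` (D (inv g) \<inter> D h) \<subseteq> D g \<inter> D (g \<otimes> h)"
    proof (intro ballI subsetI)
      fix g h y assume g: "g \<in> carrier G" and h: "h \<in> carrier G" and "y \<in> \<alpha> g ` (D (inv g) \<inter> D h)"
      then obtain x where y: "y = \<alpha> g x" and x1: "x \<in> D (inv g)" and x2: "x \<in> D h" by auto
      have xX: "x \<in> X" using sub[of "inv g"] g x1 by auto
      have "inv (inv g \<otimes> g) = \<one>" using g by simp
      hence "x \<in> D (inv (inv g \<otimes> g))" using xX one by simp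
      from key[OF inv_closed[OF g] g x1 this] have a: "y \<in> D g" using g y by simp
      have hg: "inv (inv (g \<otimes> h) \<otimes> g) = h"
        using g h by (simp add: inv_mult_group m_assoc[symmetric] inv_inv)
      have "x \<in> D (inv (inv (g \<otimes> h) \<otimes> g))" using hg x2 by simp
      from key[OF inv_closed[OF m_closed[OF g h]] g x1 this] have b: "y \<in> D (g \<otimes> h)"
        using g h y by simp
      show "y \<in> D g \<inter> D (g \<otimes> h)" using a b by simp
    qed
    have PA3: "\<forall>g\<in>carrier G. \<forall>h\<in>carrier G.
        \<forall>x \<in> D (inv g) \<inter> D (inv (h \<otimes> g)). \<alpha> h (\<alpha> g x) = \<alpha> (h \<otimes> g) x"
      using key L3 by blast
    show ?thesis unfolding partial_action_def using dat one aone PA2 PA3 by blast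
  qed
  show ?thesis using PI IS SP by blast
qed


theorem mainTheorem3:
  fixes G :: "('g, 'm) monoid_scheme" and X :: "'x set"
    and D :: "'g \<Rightarrow> 'x set" and \<alpha> :: "'g \<Rightarrow> 'x \<Rightarrow> 'x"
  assumes "group G"
    and "lax_partial_action G X D \<alpha>"
  shows "(partial_action G X D \<alpha> \<longleftrightarrow>
           {(h, g, x). h \<in> carrier G \<and> g \<in> carrier G \<and> x \<in> X \<and>
              x \<in> D (inv\<^bsub>G\<^esub> g) \<and> \<alpha> g x \<in> D (inv\<^bsub>G\<^esub> h)}
           = {(h, g, x). h \<in> carrier G \<and> g \<in> carrier G \<and> x \<in> X \<and>
              x \<in> D (inv\<^bsub>G\<^esub> g) \<inter> D (inv\<^bsub>G\<^esub> (h \<otimes>\<^bsub>G\<^esub> g))})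
       \<and> (partial_action G X D \<alpha> \<longleftrightarrow>
           (\<forall>g\<in>carrier G. \<alpha> g ` D (inv\<^bsub>G\<^esub> g) \<subseteq> D g))"
  using main_aux[OF assms] .

end
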